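(* Let $c_2,c_3,c_4,c_6,v$ be independent indeterminates and set $\mu(v)=(\mu_1,\mu_2,\mu_3,\mu_4,\mu_6)=(0,\;3v+c_2,\;c_3,\;3v^2+2c_2v+c_4,\;v^3+c_2v^2+c_4v+c_6)$. Let $S(t,v)=s(t;\mu(v))$. Then \[ \frac{\partial S}{\partial v}=S\,\frac{\partial S}{\partial t}, \] and $S(t,0)=s_0(t)$, where $s_0(t)$ is the power series with $s_0(0)=0$ defined by $s_0=t^3+c_2t^2s_0+c_3s_0^2+c_4ts_0^2+c_6s_0^3$.
   Context: For parameters $\mu=(\mu_1,\mu_2,\mu_3,\mu_4,\mu_6)$, $s(t;\mu)$ denotes the unique formal power series in $t$ with $s(0;\mu)=0$ satisfying $s=t^3+\mu_1ts+\mu_2t^2s+\mu_3s^2+\mu_4ts^2+\mu_6s^3$ (the equation of the cubic $y^2+\mu_1xy+\mu_3y=x^3+\mu_2x^2+\mu_4x+\mu_6$ in Tate coordinates $t=-x/y$, $s=-1/y$). *)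

theory Defs
  imports "HOL-Computational_Algebra.Computational_Algebra"
begin

definition tate_eq :: "'b::comm_ring_1 \<Rightarrow> 'b \<Rightarrow> 'b \<Rightarrow> 'b \<Rightarrow> 'b \<Rightarrow> 'b fps \<Rightarrow> bool" where
  "tate_eq m1 m2 m3 m4 m6 s \<longleftrightarrow>
     fps_nth s 0 = 0 \<and>
     s = fps_X ^ 3 + fps_const m1 * fps_X * s + fps_const m2 * fps_X ^ 2 * s
         + fps_const m3 * s ^ 2 + fps_const m4 * fps_X * s ^ 2 + fps_const m6 * s ^ 3"

definition tate_s :: "'b::comm_ring_1 \<Rightarrow> 'b \<Rightarrow> 'b \<Rightarrow> 'b \<Rightarrow> 'b \<Rightarrow> 'b fps" where
  "tate_s m1 m2 m3 m4 m6 = (THE s. tate_eq m1 m2 m3 m4 m6 s)"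

text \<open>Partial derivative with respect to v of a power series in t whose
coefficients are polynomials in v.\<close>
definition fps_dv :: "'a::idom poly fps \<Rightarrow> 'a poly fps" where
  "fps_dv S = Abs_fps (\<lambda>n. pderiv (fps_nth S n))"

definition fps_at_v0 :: "'a::idom poly fps \<Rightarrow> 'a fps" where
  "fps_at_v0 S = Abs_fps (\<lambda>n. poly (fps_nth S n) 0)"

end

theory Submission
  imports Defs
begin

lemma Xdvd_iff: "fps_X^n dvd (f::'a::comm_ring_1 fps) \<longleftrightarrow> (\<forall>i<n. f$i = 0)"
proof
  assume "fps_X^n dvd f"
  then obtain q where "f = fps_X^n * q" by (auto elim: dvdE)
  thus "\<forall>i<n. f$i = 0" by (simp add: fps_X_power_mult_nth)
next
  assume h: "\<forall>i<n. f$i = 0"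
  have "f = fps_X^n * fps_shift n f"
    by (rule fps_ext) (simp add: fps_X_power_mult_nth h)
  thus "fps_X^n dvd f" by (metis dvd_triv_left)
qed

primrec seqg :: "('a::comm_ring_1 fps \<Rightarrow> 'a fps) \<Rightarrow> nat \<Rightarrow> 'a list" where
  "seqg G 0 = []"
| "seqg G (Suc n) = seqg G n @ [G (Abs_fps (\<lambda>i. if i < n then seqg G n ! i else 0)) $ n]"

lemma seqg_len: "length (seqg G n) = n"
  by (induct n) auto

lemma seqg_prefix: "i < n \<Longrightarrow> seqg G (n + k) ! i = seqg G n ! i"
  by (induct k) (auto simp: nth_append seqg_len)

lemma causal_fix:
  fixes G :: "'a::comm_ring_1 fps \<Rightarrow> 'a fps"
  assumes c: "\<And>a b n. fps_X^n dvd (a - b) \<Longrightarrow> fps_X^Suc n dvd (G a - G b)"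
  shows "\<exists>!s. G s = s"
proof (rule ex_ex1I)
  define s where "s = Abs_fps (\<lambda>n. seqg G (Suc n) ! n)"
  have sc: "s $ i = seqg G n ! i" if "i < n" for i n
  proof -
    have "seqg G (Suc i + (n - Suc i)) ! i = seqg G (Suc i) ! i"
      by (rule seqg_prefix) simp
    thus ?thesis using that by (simp add: s_def)
  qed
  show "\<exists>s. G s = s"
  proof (intro exI fps_ext)
    fix n
    define t where "t = Abs_fps (\<lambda>i. if i < n then seqg G n ! i else 0)"
    have "fps_X^n dvd (s - t)" unfolding Xdvd_iff by (simp add: t_def sc)
    hence "fps_X^Suc n dvd (G s - G t)" by (rule c)
    hence "(G s - G t) $ n = 0" unfolding Xdvd_iff by simp
    hence "G s $ n = G t $ n" by simp
    also have "\<dots> = seqg G (Suc n) ! n" by (simp add: t_def nth_append seqg_len)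
    also have "\<dots> = s $ n" by (simp add: s_def)
    finally show "G s $ n = s $ n" .
  qed
next
  fix s s' assume h: "G s = s" "G s' = s'"
  have d: "fps_X^n dvd (s - s')" for n
  proof (induct n)
    case 0 thus ?case by simp
  next
    case (Suc n) thus ?case using c[OF Suc] h by simp
  qed
  show "s = s'"
  proof (rule fps_ext)
    fix n
    have "(s - s') $ n = 0" using d[of "Suc n"] unfolding Xdvd_iff by simp
    thus "s $ n = s' $ n" by simp
  qed
qed

definition tF :: "'b::comm_ring_1 \<Rightarrow> 'b \<Rightarrow> 'b \<Rightarrow> 'b \<Rightarrow> 'b \<Rightarrow> 'b fps \<Rightarrow> 'b fps" where
  "tF m1 m2 m3 m4 m6 s = fps_X ^ 3 + fps_const m1 * fps_X * s + fps_const m2 * fps_X ^ 2 * s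
         + fps_const m3 * s ^ 2 + fps_const m4 * fps_X * s ^ 2 + fps_const m6 * s ^ 3"

lemma tF_causal:
  fixes a b :: "'b::comm_ring_1 fps"
  assumes d: "fps_X^n dvd (a - b)" and a0: "a$0 = 0" and b0: "b$0 = 0"
  shows "fps_X^Suc n dvd (tF m1 m2 m3 m4 m6 a - tF m1 m2 m3 m4 m6 b)"
proof -
  have e: "tF m1 m2 m3 m4 m6 a - tF m1 m2 m3 m4 m6 b =
     (a - b) * (fps_const m1 * fps_X + fps_const m2 * fps_X * fps_X + fps_const m3 * (a + b)
       + fps_const m4 * fps_X * (a + b) + fps_const m6 * (a*a + a*b + b*b))"
    unfolding tF_def by (simp add: algebra_simps power2_eq_square power3_eq_cube)
  have "fps_X^1 dvd (fps_const m1 * fps_X + fps_const m2 * fps_X * fps_X + fps_const m3 * (a + b)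
       + fps_const m4 * fps_X * (a + b) + fps_const m6 * (a*a + a*b + b*b))"
    unfolding Xdvd_iff by (simp add: a0 b0)
  with d have "fps_X^n * fps_X^1 dvd (a - b) * (fps_const m1 * fps_X + fps_const m2 * fps_X * fps_X + fps_const m3 * (a + b)
       + fps_const m4 * fps_X * (a + b) + fps_const m6 * (a*a + a*b + b*b))"
    by (rule mult_dvd_mono)
  thus ?thesis by (simp add: e mult.commute)
qed

lemma tate_unique: "\<exists>!s. tate_eq m1 m2 m3 m4 m6 (s::'b::comm_ring_1 fps)"
proof -
  define G where "G s = tF m1 m2 m3 m4 m6 (s - fps_const (s$0))" for s :: "'b fps"
  have "\<exists>!s. G s = s"
  proof (rule causal_fix)
    fix a b :: "'b fps" and n assume "fps_X^n dvd (a - b)"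
    hence "fps_X^n dvd ((a - fps_const (a$0)) - (b - fps_const (b$0)))"
      unfolding Xdvd_iff by auto
    thus "fps_X^Suc n dvd (G a - G b)" unfolding G_def by (rule tF_causal) auto
  qed
  have G0: "G s $ 0 = 0" for s
    unfolding G_def tF_def by (simp add: power2_eq_square power3_eq_cube)
  have eq: "tate_eq m1 m2 m3 m4 m6 s \<longleftrightarrow> G s = s" for s
  proof
    assume "tate_eq m1 m2 m3 m4 m6 s" thus "G s = s"
      unfolding tate_eq_def G_def tF_def by simp
  next
    assume h: "G s = s"
    hence "s $ 0 = 0" using G0[of s] by simp
    thus "tate_eq m1 m2 m3 m4 m6 s" using h unfolding tate_eq_def G_def tF_def by simp
  qed
  show ?thesis unfolding eq by fact
qed

lemma tate_s_eq: "tate_eq m1 m2 m3 m4 m6 (tate_s m1 m2 m3 m4 m6)"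
  unfolding tate_s_def by (rule theI') (rule tate_unique)

lemma tate_s_unique: "tate_eq m1 m2 m3 m4 m6 s \<Longrightarrow> tate_s m1 m2 m3 m4 m6 = s"
  using tate_s_eq tate_unique by blast


lemma pderiv_sum': "pderiv (sum f A) = (\<Sum>x\<in>A. pderiv (f x))"
  by (induction A rule: infinite_finite_induct) (simp_all add: pderiv_add)

lemma fps_dv_nth[simp]: "fps_dv S $ n = pderiv (S $ n)"
  by (simp add: fps_dv_def)

lemma fps_dv_add[simp]: "fps_dv (a + b) = fps_dv a + fps_dv b"
  by (rule fps_ext) (simp add: pderiv_add)

lemma fps_dv_mult[simp]: "fps_dv (a * b) = fps_dv a * b + a * fps_dv b"
proof (rule fps_ext)
  fix n
  have "(\<Sum>i=0..n. pderiv (a$i * b$(n-i))) = (\<Sum>i=0..n. pderiv (a$i) * b$(n-i) + a$i * pderiv (b$(n-i)))"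
    by (rule sum.cong) (simp_all add: pderiv_mult algebra_simps)
  thus "fps_dv (a * b) $ n = (fps_dv a * b + a * fps_dv b) $ n"
    by (simp add: fps_mult_nth pderiv_sum' sum.distrib)
qed

lemma fps_dv_const[simp]: "fps_dv (fps_const c) = fps_const (pderiv c)"
  by (rule fps_ext) simp

lemma fps_dv_X[simp]: "fps_dv fps_X = 0"
  by (rule fps_ext) (simp add: fps_X_nth)

lemma fps_at_v0_nth[simp]: "fps_at_v0 S $ n = poly (S $ n) 0"
  by (simp add: fps_at_v0_def)

lemma fps_at_v0_add[simp]: "fps_at_v0 (a + b) = fps_at_v0 a + fps_at_v0 b"
  by (rule fps_ext) simp

lemma fps_at_v0_mult[simp]: "fps_at_v0 (a * b) = fps_at_v0 a * fps_at_v0 b"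
  by (rule fps_ext) (simp add: fps_mult_nth poly_sum)

lemma fps_at_v0_const[simp]: "fps_at_v0 (fps_const c) = fps_const (poly c 0)"
  by (rule fps_ext) simp

lemma fps_at_v0_X[simp]: "fps_at_v0 fps_X = fps_X"
  by (rule fps_ext) (simp add: fps_X_nth)

lemma fps_at_v0_1[simp]: "fps_at_v0 1 = 1"
  by (rule fps_ext) simp

lemma fps_at_v0_pow[simp]: "fps_at_v0 (a ^ n) = fps_at_v0 a ^ n"
  by (induct n) simp_all



lemma alg:
  fixes X S dv dt a2 a3 a4 a6 :: "'b::comm_ring_1"
  assumes Ev: "dv = 3 * X * X * S + a2 * X * X * dv + a3 * (dv * S + S * dv) + (2 * a2) * X * S * S
     + a4 * X * (dv * S + S * dv) + a4 * S * S * S + a6 * ((dv * S + S * dv) * S + S * S * dv)"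
  and Et: "dt = (X + X) * X + X * X + a2 * ((X + X) * S + X * X * dt)
     + a3 * (dt * S + S * dt) + a4 * (S * S + X * (dt * S + S * dt))
     + a6 * ((dt * S + S * dt) * S + S * S * dt)"
  shows "(1 - (a2 * X * X + 2 * a3 * S + 2 * a4 * X * S + 3 * a6 * S * S)) * dv
       = (1 - (a2 * X * X + 2 * a3 * S + 2 * a4 * X * S + 3 * a6 * S * S)) * (S * dt)"
proof -
  have "(1 - (a2 * X * X + 2 * a3 * S + 2 * a4 * X * S + 3 * a6 * S * S)) * dv - (3 * X * X * S + 2 * a2 * X * S * S + a4 * S * S * S) = dv - (3 * X * X * S + a2 * X * X * dv + a3 * (dv * S + S * dv) + (2 * a2) * X * S * S + a4 * X * (dv * S + S * dv) + a4 * S * S * S + a6 * ((dv * S + S * dv) * S + S * S * dv))"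
    by (simp add: algebra_simps)
  hence 1: "(1 - (a2 * X * X + 2 * a3 * S + 2 * a4 * X * S + 3 * a6 * S * S)) * dv = 3 * X * X * S + 2 * a2 * X * S * S + a4 * S * S * S" using Ev by (metis eq_iff_diff_eq_0)
  have "(1 - (a2 * X * X + 2 * a3 * S + 2 * a4 * X * S + 3 * a6 * S * S)) * dt - (3 * X * X + 2 * a2 * X * S + a4 * S * S) = dt - ((X + X) * X + X * X + a2 * ((X + X) * S + X * X * dt) + a3 * (dt * S + S * dt) + a4 * (S * S + X * (dt * S + S * dt)) + a6 * ((dt * S + S * dt) * S + S * S * dt))"
    by (simp add: algebra_simps)
  hence 2: "(1 - (a2 * X * X + 2 * a3 * S + 2 * a4 * X * S + 3 * a6 * S * S)) * dt = 3 * X * X + 2 * a2 * X * S + a4 * S * S" using Et by (metis eq_iff_diff_eq_0)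
  have "(1 - (a2 * X * X + 2 * a3 * S + 2 * a4 * X * S + 3 * a6 * S * S)) * (S * dt) = S * ((1 - (a2 * X * X + 2 * a3 * S + 2 * a4 * X * S + 3 * a6 * S * S)) * dt)" by (simp add: algebra_simps)
  also have "... = (1 - (a2 * X * X + 2 * a3 * S + 2 * a4 * X * S + 3 * a6 * S * S)) * dv" unfolding 1 2 by (simp add: algebra_simps)
  finally show ?thesis by simp
qed

theorem mainTheorem6:
  fixes c2 c3 c4 c6 :: "'a::idom"
  defines "v \<equiv> [:0, 1:] :: 'a poly"
  defines "S \<equiv> tate_s 0 (3 * v + [:c2:]) [:c3:]
                 (3 * v ^ 2 + 2 * [:c2:] * v + [:c4:])
                 (v ^ 3 + [:c2:] * v ^ 2 + [:c4:] * v + [:c6:])"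
  shows "fps_dv S = S * fps_deriv S \<and> fps_at_v0 S = tate_s 0 c2 c3 c4 c6"
proof -
  define m2 where "m2 = 3 * v + [:c2:]"
  define m3 where "m3 = ([:c3:] :: 'a poly)"
  define m4 where "m4 = 3 * v ^ 2 + 2 * [:c2:] * v + [:c4:]"
  define m6 where "m6 = v ^ 3 + [:c2:] * v ^ 2 + [:c4:] * v + [:c6:]"
  have te: "tate_eq 0 m2 m3 m4 m6 S" unfolding S_def m2_def m3_def m4_def m6_def by (rule tate_s_eq)
  hence S0: "S $ 0 = 0" and E: "S = fps_X * fps_X * fps_X + fps_const m2 * fps_X * fps_X * S
     + fps_const m3 * S * S + fps_const m4 * fps_X * S * S + fps_const m6 * S * S * S"
    unfolding tate_eq_def by (simp_all add: power2_eq_square power3_eq_cube mult.assoc)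
  have dv1: "pderiv v = 1" unfolding v_def by (simp add: pderiv_pCons)
  have dc: "pderiv [:c:] = 0" for c :: 'a by (simp add: pderiv_pCons)
  have d2: "pderiv m2 = 3" unfolding m2_def by (simp add: pderiv_add pderiv_mult dv1 dc)
  have d3: "pderiv m3 = 0" unfolding m3_def by (simp add: dc)
  have d4: "pderiv m4 = 2 * m2" unfolding m4_def m2_def
    by (simp add: pderiv_add pderiv_mult power2_eq_square dv1 dc pderiv_smult algebra_simps)
  have d6: "pderiv m6 = m4" unfolding m6_def m4_def
    by (simp add: pderiv_add pderiv_mult power2_eq_square power3_eq_cube dv1 dc pderiv_smult algebra_simps)
  define X :: "'a poly fps" where "X = fps_X"
  define dv where "dv = fps_dv S"
  define dt where "dt = fps_deriv S"
  have dX: "fps_dv X = 0" unfolding X_def by simp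
  have c3: "fps_const (3::'a poly) = 3" by (simp add: fps_numeral_fps_const)
  have c2: "fps_const (2 * m2) = 2 * fps_const m2" by (simp add: fps_numeral_fps_const)
  have t1: "fps_dv (X*X*X) = 0" by (simp add: dX)
  have t2: "fps_dv (fps_const m2 * X * X * S) = 3 * X * X * S + fps_const m2 * X * X * dv"
    by (simp add: dX d2 c3 dv_def)
  have t3: "fps_dv (fps_const m3 * S * S) = fps_const m3 * (dv * S + S * dv)"
    by (simp add: d3 dv_def)
  have t4: "fps_dv (fps_const m4 * X * S * S) = (2 * fps_const m2) * X * S * S + fps_const m4 * X * (dv * S + S * dv)"
    by (simp add: dX d4 c2 dv_def algebra_simps)
  have t5: "fps_dv (fps_const m6 * S * S * S) = fps_const m4 * S * S * S + fps_const m6 * ((dv * S + S * dv) * S + S * S * dv)"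
    by (simp add: d6 dv_def algebra_simps)
  have Ev: "dv = 3 * X * X * S + fps_const m2 * X * X * dv + fps_const m3 * (dv * S + S * dv) + (2 * fps_const m2) * X * S * S
     + fps_const m4 * X * (dv * S + S * dv) + fps_const m4 * S * S * S + fps_const m6 * ((dv * S + S * dv) * S + S * S * dv)"
  proof -
    have "dv = fps_dv (X*X*X + fps_const m2 * X * X * S + fps_const m3 * S * S + fps_const m4 * X * S * S + fps_const m6 * S * S * S)"
      unfolding dv_def X_def by (subst E) (rule refl)
    also have "\<dots> = 3 * X * X * S + fps_const m2 * X * X * dv + fps_const m3 * (dv * S + S * dv) + (2 * fps_const m2) * X * S * S
     + fps_const m4 * X * (dv * S + S * dv) + fps_const m4 * S * S * S + fps_const m6 * ((dv * S + S * dv) * S + S * S * dv)"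
      by (simp only: fps_dv_add t1 t2 t3 t4 t5) (simp add: add.assoc)
    finally show ?thesis .
  qed
  have dX': "fps_deriv X = 1" unfolding X_def by simp
  have Et: "dt = (X + X) * X + X * X + fps_const m2 * ((X + X) * S + X * X * dt)
     + fps_const m3 * (dt * S + S * dt) + fps_const m4 * (S * S + X * (dt * S + S * dt))
     + fps_const m6 * ((dt * S + S * dt) * S + S * S * dt)"
  proof -
    have "dt = fps_deriv (X*X*X + fps_const m2 * X * X * S + fps_const m3 * S * S + fps_const m4 * X * S * S + fps_const m6 * S * S * S)"
      unfolding dt_def X_def by (subst E) (rule refl)
    thus ?thesis by (simp add: dX' dt_def algebra_simps)
  qed
  define B where "B = fps_const m2 * X * X + 2 * fps_const m3 * S + 2 * fps_const m4 * X * S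
     + 3 * fps_const m6 * S * S"
  have "(1 - B) * dv = (1 - B) * (S * dt)"
    unfolding B_def by (rule alg[OF Ev Et])
  moreover have "(1 - B) $ 0 = 1" unfolding B_def X_def by (simp add: S0)
  hence "1 - B \<noteq> 0" by auto
  ultimately have 1: "fps_dv S = S * fps_deriv S" unfolding dv_def dt_def by simp
  have "tate_eq 0 c2 c3 c4 c6 (fps_at_v0 S)"
  proof -
    have "fps_at_v0 S = fps_at_v0 (fps_X ^ 3 + fps_const 0 * fps_X * S + fps_const m2 * fps_X ^ 2 * S
         + fps_const m3 * S ^ 2 + fps_const m4 * fps_X * S ^ 2 + fps_const m6 * S ^ 3)"
      using te unfolding tate_eq_def by simp
    thus ?thesis unfolding tate_eq_def using S0
      by (simp add: m2_def m3_def m4_def m6_def v_def)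
  qed
  hence "fps_at_v0 S = tate_s 0 c2 c3 c4 c6" using tate_s_unique by metis
  with 1 show ?thesis by simp
qed

end
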